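(* The theory TRC$^*$ is inconsistent.
   Context: TRC$^*$ is a first-order theory with equality. Its language has a binary function "application", written by juxtaposition ($xy$ denotes $x$ applied to $y$), with the convention that juxtaposition associates to the left ($xyz=(xy)z$). It also has constants $K$, $\mathrm{Abst}$, $\mathrm{Eq}$, $p_1$, $p_2$ and a binary function $\langle x,y\rangle$ (pairing); here $K$ is a constant, i.e. an object of the domain. The axioms of TRC$^*$ are: (I$^*$) $K\,x\,y=x$; (II) $p_1\langle x_1,x_2\rangle=x_1$ and $p_2\langle x_1,x_2\rangle=x_2$; (III) $\langle p_1x,p_2x\rangle=x$; (IV) $\langle f,g\rangle x=\langle fx,gx\rangle$; (V$^*$) $\mathrm{Abst}\,x\,y\,z=x\,(K z)\,(y\,z)$; (VI) $\mathrm{Eq}\langle x,y\rangle=p_1$ if $x=y$, and $\mathrm{Eq}\langle x,y\rangle=p_2$ if $x\neq y$; (VII) extensionality: if $fx=gx$ for all $x$, then $f=g$; (VIII) $p_1\neq p_2$. *)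

theory Defs
  imports Main
begin

definition trc_model ::
  "('a \<Rightarrow> 'a \<Rightarrow> 'a) \<Rightarrow> 'a \<Rightarrow> 'a \<Rightarrow> 'a \<Rightarrow> 'a \<Rightarrow> 'a \<Rightarrow> ('a \<Rightarrow> 'a \<Rightarrow> 'a) \<Rightarrow> bool"
where
  "trc_model ap K Abst Eq p1 p2 pr \<longleftrightarrow>
     (\<forall>x y. ap (ap K x) y = x) \<and>
     (\<forall>x1 x2. ap p1 (pr x1 x2) = x1 \<and> ap p2 (pr x1 x2) = x2) \<and>
     (\<forall>x. pr (ap p1 x) (ap p2 x) = x) \<and>
     (\<forall>f g x. ap (pr f g) x = pr (ap f x) (ap g x)) \<and>
     (\<forall>x y z. ap (ap (ap Abst x) y) z = ap (ap x (ap K z)) (ap y z)) \<and>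
     (\<forall>x y. ap Eq (pr x y) = (if x = y then p1 else p2)) \<and>
     (\<forall>f g. (\<forall>x. ap f x = ap g x) \<longrightarrow> f = g) \<and>
     p1 \<noteq> p2"

end

theory Submission
  imports Defs
begin

theorem mainTheorem7:
  fixes ap :: "'a \<Rightarrow> 'a \<Rightarrow> 'a" and pr :: "'a \<Rightarrow> 'a \<Rightarrow> 'a"
    and K Abst Eq p1 p2 :: 'a
  shows "\<not> trc_model ap K Abst Eq p1 p2 pr"
proof
  assume "trc_model ap K Abst Eq p1 p2 pr"
  then have Kax: "\<And>x y. ap (ap K x) y = x"
    and Aax: "\<And>x y z. ap (ap (ap Abst x) y) z = ap (ap x (ap K z)) (ap y z)"
    and Pax: "\<And>f g x. ap (pr f g) x = pr (ap f x) (ap g x)"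
    and Eax: "\<And>x y. ap Eq (pr x y) = (if x = y then p1 else p2)"
    and ext: "\<And>f g. (\<And>x. ap f x = ap g x) \<Longrightarrow> f = g"
    and ne: "p1 \<noteq> p2"
    unfolding trc_model_def by blast+
  define W where "W = ap (ap Abst Abst) K"
  have W: "\<And>z w. ap (ap W z) w = ap z z"
    unfolding W_def by (simp add: Aax Kax)
  define D where "D = ap (ap Abst (ap K Eq)) (pr W (ap K (ap K p2)))"
  have D: "\<And>z. ap D z = ap Eq (pr (ap W z) (ap K p2))"
    unfolding D_def by (simp add: Aax Kax Pax)
  show False
  proof (cases "ap D D = p2")
    case True
    have "ap W D = ap K p2" by (rule ext) (simp add: W Kax True)
    then have "ap D D = p1" using D Eax by simp
    then show False using True ne by simp
  next
    case False
    have "ap W D \<noteq> ap K p2"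
    proof
      assume "ap W D = ap K p2"
      then have "ap (ap W D) D = ap (ap K p2) D" by simp
      then show False using False W Kax by simp
    qed
    then have "ap D D = p2" using D Eax by simp
    then show False using False by simp
  qed
qed

end
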